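(* Let $\gamma>0$ and suppose $V^{k-1}$ and $V^k$ are finite dimensional. Consider the eigenproblem: find $(\sigma,u,p)\in V^{k-1}\times V^k\times\mathfrak H^k$ and $\lambda\in\mathbb R$ with $$A(\sigma,u,p;\tau,v,q)=\lambda B_\gamma(\sigma,u,p;\tau,v,q)\quad\forall(\tau,v,q)\in V^{k-1}\times V^k\times\mathfrak H^k,$$ where $A(\sigma,u,p;\tau,v,q)=\langle\mathrm d^ku,\mathrm d^kv\rangle+\langle\mathrm d^{k-1}\sigma,v\rangle+\langle u,\mathrm d^{k-1}\tau\rangle-\langle\sigma,\tau\rangle+\langle p,v\rangle+\langle u,q\rangle$ and $B_\gamma(\sigma,u,p;\tau,v,q)=\gamma^{-1}\langle u-u_{\mathfrak H},v-v_{\mathfrak H}\rangle+\langle u_{\mathfrak H},v_{\mathfrak H}\rangle+\langle\mathrm d^ku,\mathrm d^kv\rangle+\langle\sigma,\tau\rangle+\gamma\langle\mathrm d^{k-1}\sigma,\mathrm d^{k-1}\tau\rangle+\langle p,q\rangle$. Then: (i) for every $\sigma\in V^{k-1}$, $(\sigma,-\gamma\mathrm d^{k-1}\sigma,0)$ is an eigenvector with $\lambda=-1$; (ii) for every $p\in\mathfrak H^k$ and $\lambda\in\{1,-1\}$, $(0,\lambda p,p)$ is an eigenvector with eigenvalue $\lambda$; (iii) if $u_\perp\in\mathfrak Z^{k,\perp}$ and $\mu>0$ satisfy $\langle\mathrm d^ku_\perp,\mathrm d^kv_\perp\rangle=\mu\langle u_\perp,v_\perp\rangle$ for all $v_\perp\in\mathfrak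 Z^{k,\perp}$, then $(0,u_\perp,0)$ is an eigenvector with $\lambda=\frac{\mu\gamma}{\mu\gamma+1}$; (iv) if $\sigma_\perp\in\mathfrak Z^{k-1,\perp}$ and $\nu>0$ satisfy $\langle\mathrm d^{k-1}\sigma_\perp,\mathrm d^{k-1}\tau_\perp\rangle=\nu\langle\sigma_\perp,\tau_\perp\rangle$ for all $\tau_\perp\in\mathfrak Z^{k-1,\perp}$, then with $\lambda=\frac{\nu\gamma}{\nu\gamma+1}$, $(\sigma_\perp,\gamma\lambda^{-1}\mathrm d^{k-1}\sigma_\perp,0)$ is an eigenvector with eigenvalue $\lambda$. Moreover, the eigenvectors in (i)–(iv) contain a basis of $V^{k-1}\times V^k\times\mathfrak H^k$, so these are all the eigenpairs.
   Context: $(\{W^j\},\{\mathrm d^j\})$ is a closed Hilbert complex with inner product $\langle\cdot,\cdot\rangle$ and norm $\|\cdot\|$, and $(\{V^j\},\{\mathrm d^j\})$ its domain complex $\cdots\to V^{k-1}\xrightarrow{\mathrm d^{k-1}}V^k\xrightarrow{\mathrm d^k}V^{k+1}\to\cdots$ ($V^j\subseteq W^j$ the domain of $\mathrm d^j$, $\mathrm d^j\mathrm d^{j-1}=0$, ranges closed). Harmonic forms: $\mathfrak H^k=\{\mathfrak h\in V^k:\mathrm d^k\mathfrak h=0,\ \langle\mathfrak h,\mathrm d^{k-1}\sigma\rangle=0\ \forall\sigma\in V^{k-1}\}$. $\mathfrak Z^{j,\perp}=\{v\in V^j:\langle v,z\rangle=0\ \forall z\in V^j\text{ with }\mathrm d^jz=0\}$.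 For $v\in V^k$, $v_{\mathfrak H}$ denotes the $\langle\cdot,\cdot\rangle$-orthogonal projection of $v$ onto $\mathfrak H^k$ and $v_\perp$ the orthogonal projection onto $\mathfrak Z^{k,\perp}$ (similarly $\tau_\perp$ for $\tau\in V^{k-1}$ onto $\mathfrak Z^{k-1,\perp}$). *)

theory Defs
  imports "HOL-Analysis.Analysis"
begin

definition fin_dim_subspace :: "'a::real_vector set \<Rightarrow> bool" where
  "fin_dim_subspace V \<longleftrightarrow> subspace V \<and> (\<exists>S. finite S \<and> span S = V)"

text \<open>A map that is linear on its domain V (the domain of an unbounded operator).\<close>
definition linear_on_dom :: "'a::real_vector set \<Rightarrow> ('a \<Rightarrow> 'b::real_vector) \<Rightarrow> bool" where
  "linear_on_dom V f \<longleftrightarrow> (\<forall>x\<in>V. \<forall>y\<in>V. f (x + y) = f x + f y) \<and> (\<forall>c. \<forall>x\<in>V. f (c *\<^sub>R x) = c *\<^sub>R f x)"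

definition orth_proj :: "'a::real_inner set \<Rightarrow> 'a \<Rightarrow> 'a" where
  "orth_proj S v = (THE p. p \<in> S \<and> (\<forall>s\<in>S. inner (v - p) s = 0))"

text \<open>Harmonic forms at level k: V1 = V^k, V0 = V^(k-1), d0 = d^(k-1), d1 = d^k.\<close>
definition harmonic :: "'a::real_inner set \<Rightarrow> 'b::real_inner set \<Rightarrow> ('a \<Rightarrow> 'b) \<Rightarrow> ('b \<Rightarrow> 'c::real_inner) \<Rightarrow> 'b set" where
  "harmonic V0 V1 d0 d1 = {h \<in> V1. d1 h = 0 \<and> (\<forall>\<sigma>\<in>V0. inner h (d0 \<sigma>) = 0)}"

definition Zperp :: "'a::real_inner set \<Rightarrow> ('a \<Rightarrow> 'b::real_vector) \<Rightarrow> 'a set" where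
  "Zperp V d = {v \<in> V. \<forall>z\<in>V. d z = 0 \<longrightarrow> inner v z = 0}"

definition formA :: "('a::real_inner \<Rightarrow> 'b::real_inner) \<Rightarrow> ('b \<Rightarrow> 'c::real_inner)
    \<Rightarrow> 'a \<times> 'b \<times> 'b \<Rightarrow> 'a \<times> 'b \<times> 'b \<Rightarrow> real" where
  "formA d0 d1 x y = (case x of (\<sigma>, u, p) \<Rightarrow> case y of (\<tau>, v, q) \<Rightarrow>
      inner (d1 u) (d1 v) + inner (d0 \<sigma>) v + inner u (d0 \<tau>) - inner \<sigma> \<tau> + inner p v + inner u q)"

definition formB :: "'a::real_inner set \<Rightarrow> 'b::real_inner set \<Rightarrow> ('a \<Rightarrow> 'b) \<Rightarrow> ('b \<Rightarrow> 'c::real_inner)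
    \<Rightarrow> real \<Rightarrow> 'a \<times> 'b \<times> 'b \<Rightarrow> 'a \<times> 'b \<times> 'b \<Rightarrow> real" where
  "formB V0 V1 d0 d1 \<gamma> x y = (case x of (\<sigma>, u, p) \<Rightarrow> case y of (\<tau>, v, q) \<Rightarrow>
      (let H = harmonic V0 V1 d0 d1; uH = orth_proj H u; vH = orth_proj H v in
        inverse \<gamma> * inner (u - uH) (v - vH) + inner uH vH + inner (d1 u) (d1 v)
        + inner \<sigma> \<tau> + \<gamma> * inner (d0 \<sigma>) (d0 \<tau>) + inner p q))"

definition mixed_space :: "'a::real_inner set \<Rightarrow> 'b::real_inner set \<Rightarrow> ('a \<Rightarrow> 'b) \<Rightarrow> ('b \<Rightarrow> 'c::real_inner)
    \<Rightarrow> ('a \<times> 'b \<times> 'b) set" where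
  "mixed_space V0 V1 d0 d1 = V0 \<times> V1 \<times> harmonic V0 V1 d0 d1"

definition is_eigenpair :: "'a::real_inner set \<Rightarrow> 'b::real_inner set \<Rightarrow> ('a \<Rightarrow> 'b) \<Rightarrow> ('b \<Rightarrow> 'c::real_inner)
    \<Rightarrow> real \<Rightarrow> real \<Rightarrow> 'a \<times> 'b \<times> 'b \<Rightarrow> bool" where
  "is_eigenpair V0 V1 d0 d1 \<gamma> lam x \<longleftrightarrow>
     x \<in> mixed_space V0 V1 d0 d1 \<and> x \<noteq> 0 \<and>
     (\<forall>y\<in>mixed_space V0 V1 d0 d1. formA d0 d1 x y = lam * formB V0 V1 d0 d1 \<gamma> x y)"

definition listed_eigenpairs :: "'a::real_inner set \<Rightarrow> 'b::real_inner set \<Rightarrow> ('a \<Rightarrow> 'b) \<Rightarrow> ('b \<Rightarrow> 'c::real_inner)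
    \<Rightarrow> real \<Rightarrow> (('a \<times> 'b \<times> 'b) \<times> real) set" where
  "listed_eigenpairs V0 V1 d0 d1 \<gamma> =
     {((\<sigma>, - \<gamma> *\<^sub>R d0 \<sigma>, 0), -1) | \<sigma>. \<sigma> \<in> V0 \<and> \<sigma> \<noteq> 0}
   \<union> {((0, l *\<^sub>R p, p), l) | p l. p \<in> harmonic V0 V1 d0 d1 \<and> p \<noteq> 0 \<and> l \<in> {1, -1}}
   \<union> {((0, u, 0), \<mu> * \<gamma> / (\<mu> * \<gamma> + 1)) | u \<mu>. u \<in> Zperp V1 d1 \<and> u \<noteq> 0 \<and> \<mu> > 0 \<and>
        (\<forall>v\<in>Zperp V1 d1. inner (d1 u) (d1 v) = \<mu> * inner u v)}
   \<union> {((\<sigma>, (\<gamma> / (\<nu> * \<gamma> / (\<nu> * \<gamma> + 1))) *\<^sub>R d0 \<sigma>, 0), \<nu> * \<gamma> / (\<nu> * \<gamma> + 1)) | \<sigma> \<nu>.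
        \<sigma> \<in> Zperp V0 d0 \<and> \<sigma> \<noteq> 0 \<and> \<nu> > 0 \<and>
        (\<forall>\<tau>\<in>Zperp V0 d0. inner (d0 \<sigma>) (d0 \<tau>) = \<nu> * inner \<sigma> \<tau>)}"

end

theory Submission
  imports Defs
begin

lemma lin_add: "linear_on_dom V f \<Longrightarrow> x\<in>V \<Longrightarrow> y\<in>V \<Longrightarrow> f (x+y) = f x + f y"
  by (simp add: linear_on_dom_def)
lemma lin_scale: "linear_on_dom V f \<Longrightarrow> x\<in>V \<Longrightarrow> f (c *\<^sub>R x) = c *\<^sub>R f x"
  by (simp add: linear_on_dom_def)
lemma lin_zero: "linear_on_dom V f \<Longrightarrow> subspace V \<Longrightarrow> f 0 = 0"
  using lin_scale[of V f 0 0] by (simp add: subspace_0)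
lemma lin_neg: "linear_on_dom V f \<Longrightarrow> x\<in>V \<Longrightarrow> f (- x) = - f x"
  using lin_scale[of V f x "-1"] by simp
lemma lin_diff: "linear_on_dom V f \<Longrightarrow> subspace V \<Longrightarrow> x\<in>V \<Longrightarrow> y\<in>V \<Longrightarrow> f (x - y) = f x - f y"
  using lin_add[of V f x "-y"] lin_neg[of V f y] by (simp add: subspace_neg)
lemma lin_mono: "linear_on_dom V f \<Longrightarrow> W \<subseteq> V \<Longrightarrow> linear_on_dom W f"
  unfolding linear_on_dom_def by blast
lemma lin_sum:
  assumes "linear_on_dom V f" "subspace V" "finite I" "\<And>i. i\<in>I \<Longrightarrow> g i \<in> V"
  shows "f (\<Sum>i\<in>I. g i) = (\<Sum>i\<in>I. f (g i))"
  using assms(3,4)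
proof (induction I rule: finite_induct)
  case empty then show ?case using lin_zero[OF assms(1,2)] by simp
next
  case (insert a I)
  have "(\<Sum>i\<in>I. g i) \<in> V" using insert by (intro subspace_sum[OF assms(2)]) auto
  then show ?case using insert lin_add[OF assms(1), of "g a" "\<Sum>i\<in>I. g i"] by simp
qed

lemma orth_decomp:
  fixes T :: "'a::real_inner set"
  assumes "finite T"
  obtains y where "y \<in> span T" "\<forall>s\<in>span T. inner (x - y) s = 0"
proof -
  obtain C where C: "finite C" "span C = span T" "pairwise orthogonal C"
    using basis_orthogonal[OF assms] by blast
  define y where "y = (\<Sum>b\<in>C. (inner b x / inner b b) *\<^sub>R b)"
  have *: "orthogonal (x - y) c" if "c \<in> C" for c
  proof -
    have "inner y c = (\<Sum>b\<in>C. (inner b x / inner b b) * inner b c)"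
      by (simp add: y_def inner_sum_left)
    also have "\<dots> = (\<Sum>b\<in>C. if b = c then inner b x / inner b b * inner b c else 0)"
      by (rule sum.cong) (use C(3) that in \<open>auto simp: pairwise_def orthogonal_def\<close>)
    also have "\<dots> = inner c x / inner c c * inner c c" using C(1) that by simp
    also have "\<dots> = inner x c" by (cases "c = 0") (auto simp: inner_commute)
    finally show ?thesis by (simp add: inner_diff_left orthogonal_def)
  qed
  have "y \<in> span T" unfolding y_def C(2)[symmetric]
    by (intro span_sum span_scale span_base)
  moreover have "\<forall>s\<in>span T. inner (x - y) s = 0"
    using orthogonal_to_span[of _ C "x - y"] * C(2) by (auto simp: orthogonal_def)
  ultimately show ?thesis using that by blast
qed

lemma orth_proj_eq:
  fixes H :: "'a::real_inner set"
  assumes "finite T" "H = span T" "p \<in> H" "\<forall>s\<in>H. inner (v - p) s = 0"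
  shows "orth_proj H v = p"
  unfolding orth_proj_def
proof (rule the_equality)
  show "p \<in> H \<and> (\<forall>s\<in>H. inner (v - p) s = 0)" using assms by blast
next
  fix p' assume p': "p' \<in> H \<and> (\<forall>s\<in>H. inner (v - p') s = 0)"
  have m: "p' - p \<in> H" using p' assms(2,3) by (simp add: span_diff)
  have "inner (p' - p) (p' - p) = inner (v - p) (p' - p) - inner (v - p') (p' - p)"
    by (simp add: inner_diff_left)
  also have "\<dots> = 0" using m p' assms(4) by simp
  finally show "p' = p" by simp
qed

lemma orth_proj_char:
  fixes H :: "'a::real_inner set"
  assumes "finite T" "H = span T"
  shows "orth_proj H v \<in> H \<and> (\<forall>s\<in>H. inner (v - orth_proj H v) s = 0)"
proof -
  obtain y where "y \<in> span T" "\<forall>s\<in>span T. inner (v - y) s = 0" using orth_decomp[OF assms(1)] by blast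
  then show ?thesis using orth_proj_eq[OF assms, of y v] assms(2) by simp
qed

lemma findim_sub:
  fixes T :: "'a::real_vector set"
  assumes "finite T" "subspace W" "W \<subseteq> span T"
  obtains T' where "finite T'" "W = span T'"
proof -
  obtain B where B: "B \<subseteq> W" "independent B" "W \<subseteq> span B"
    using maximal_independent_subset[of W] by blast
  have "finite B" using independent_span_bound[OF assms(1) B(2)] B(1) assms(3) by blast
  moreover have "span B \<subseteq> W" using B(1) assms(2) by (simp add: span_minimal)
  ultimately show ?thesis using that B(3) by blast
qed

lemma gs_orth:
  fixes C :: "'a::real_inner set"
  assumes "finite C" "pairwise orthogonal C" "c \<in> C"
  shows "inner (x - (\<Sum>b\<in>C. (inner b x / inner b b) *\<^sub>R b)) c = 0"
proof -
  have "inner (\<Sum>b\<in>C. (inner b x / inner b b) *\<^sub>R b) c = (\<Sum>b\<in>C. (inner b x / inner b b) * inner b c)"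
    by (simp add: inner_sum_left)
  also have "\<dots> = (\<Sum>b\<in>C. if b = c then inner b x / inner b b * inner b c else 0)"
    by (rule sum.cong) (use assms in \<open>auto simp: pairwise_def orthogonal_def\<close>)
  also have "\<dots> = inner c x / inner c c * inner c c" using assms by simp
  also have "\<dots> = inner x c" by (cases "c = 0") (auto simp: inner_commute)
  finally show ?thesis by (simp add: inner_diff_left)
qed

lemma compact_box:
  fixes C :: "'a::real_normed_vector set"
  assumes "finite C"
  shows "compact {(\<Sum>b\<in>C. f b *\<^sub>R b) | f. \<forall>b\<in>C. \<bar>f b\<bar> \<le> r b}"
  using assms
proof (induction C rule: finite_induct)
  case empty then show ?case by simp
next
  case (insert a C)
  let ?K = "{(\<Sum>b\<in>C. f b *\<^sub>R b) | f. \<forall>b\<in>C. \<bar>f b\<bar> \<le> r b}"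
  let ?S = "(\<lambda>t. t *\<^sub>R a) ` {-r a..r a}"
  have cS: "compact ?S" by (intro compact_continuous_image continuous_intros compact_Icc)
  have eq: "{(\<Sum>b\<in>insert a C. f b *\<^sub>R b) | f. \<forall>b\<in>insert a C. \<bar>f b\<bar> \<le> r b} = {x + y | x y. x \<in> ?S \<and> y \<in> ?K}"
  proof (intro set_eqI iffI)
    fix z assume "z \<in> {(\<Sum>b\<in>insert a C. f b *\<^sub>R b) | f. \<forall>b\<in>insert a C. \<bar>f b\<bar> \<le> r b}"
    then obtain f where f: "z = (\<Sum>b\<in>insert a C. f b *\<^sub>R b)" "\<forall>b\<in>insert a C. \<bar>f b\<bar> \<le> r b" by blast
    then have "z = f a *\<^sub>R a + (\<Sum>b\<in>C. f b *\<^sub>R b)" using insert by simp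
    moreover have "f a *\<^sub>R a \<in> ?S" using f(2) by (intro imageI) (auto simp: abs_le_iff)
    moreover have "(\<Sum>b\<in>C. f b *\<^sub>R b) \<in> ?K" using f(2) by blast
    ultimately show "z \<in> {x + y | x y. x \<in> ?S \<and> y \<in> ?K}" by blast
  next
    fix z assume "z \<in> {x + y | x y. x \<in> ?S \<and> y \<in> ?K}"
    then obtain t f where tf: "z = t *\<^sub>R a + (\<Sum>b\<in>C. f b *\<^sub>R b)" "t \<in> {-r a..r a}" "\<forall>b\<in>C. \<bar>f b\<bar> \<le> r b" by blast
    define g where "g = f(a := t)"
    have "(\<Sum>b\<in>C. g b *\<^sub>R b) = (\<Sum>b\<in>C. f b *\<^sub>R b)" using insert(2) by (intro sum.cong) (auto simp: g_def)
    then have "z = (\<Sum>b\<in>insert a C. g b *\<^sub>R b)" using tf insert by (simp add: g_def)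
    moreover have "\<forall>b\<in>insert a C. \<bar>g b\<bar> \<le> r b" using tf insert(2) by (auto simp: g_def)
    ultimately show "z \<in> {(\<Sum>b\<in>insert a C. f b *\<^sub>R b) | f. \<forall>b\<in>insert a C. \<bar>f b\<bar> \<le> r b}" by blast
  qed
  show ?case unfolding eq by (rule compact_sums[OF cS insert(3)])
qed

lemma max_exists:
  fixes W :: "'a::real_inner set" and D :: "'a \<Rightarrow> 'c::real_inner"
  assumes T: "finite T" "W = span T" and lin: "linear_on_dom W D" and ne: "W \<noteq> {0}"
  shows "\<exists>w\<in>W. norm w = 1 \<and> (\<forall>x\<in>W. norm x = 1 \<longrightarrow> norm (D x) \<le> norm (D w))"
proof -
  obtain C0 where C0: "finite C0" "span C0 = span T" "pairwise orthogonal C0"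
    using basis_orthogonal[OF T(1)] by blast
  define C where "C = C0 - {0}"
  have C: "finite C" "span C = W" "pairwise orthogonal C" "0 \<notin> C"
    using C0 T by (auto simp: C_def pairwise_def)
  have subW: "subspace W" using T by simp
  have expand: "x = (\<Sum>b\<in>C. (inner b x / inner b b) *\<^sub>R b)" if "x \<in> W" for x
  proof -
    let ?y = "(\<Sum>b\<in>C. (inner b x / inner b b) *\<^sub>R b)"
    have o: "orthogonal (x - ?y) c" if "c \<in> C" for c
      using gs_orth[OF C(1,3) that] by (simp add: orthogonal_def)
    have "?y \<in> span C" by (intro span_sum span_scale span_base)
    then have "x - ?y \<in> span C" using that C(2) span_diff by blast
    then have "orthogonal (x - ?y) (x - ?y)" using orthogonal_to_span o by blast
    then show ?thesis unfolding orthogonal_self right_minus_eq .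
  qed
  define K where "K = {(\<Sum>b\<in>C. f b *\<^sub>R b) | f. \<forall>b\<in>C. \<bar>f b\<bar> \<le> 1 / norm b}"
  have cK: "compact K" using compact_box[OF C(1)] unfolding K_def by simp
  have "K \<subseteq> span C"
  proof
    fix x assume "x \<in> K"
    then obtain f where "x = (\<Sum>b\<in>C. f b *\<^sub>R b)" unfolding K_def by blast
    moreover have "(\<Sum>b\<in>C. f b *\<^sub>R b) \<in> span C" by (intro span_sum span_scale span_base)
    ultimately show "x \<in> span C" by simp
  qed
  then have KW: "K \<subseteq> W" using C(2) by simp
  have sphK: "W \<inter> sphere 0 1 \<subseteq> K"
  proof
    fix x assume x: "x \<in> W \<inter> sphere 0 1"
    have "\<bar>inner b x / inner b b\<bar> \<le> 1 / norm b" if "b \<in> C" for b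
    proof -
      have nb: "norm b > 0" using C(4) that by auto
      have bb: "inner b b = norm b * norm b" by (simp add: power2_eq_square[symmetric] power2_norm_eq_inner)
      have "\<bar>inner b x\<bar> \<le> norm b" using Cauchy_Schwarz_ineq2[of b x] x by simp
      then have "\<bar>inner b x\<bar> / (norm b * norm b) \<le> norm b / (norm b * norm b)"
        using nb by (intro divide_right_mono) auto
      then show ?thesis using nb bb by (simp add: abs_div)
    qed
    note bnd = this
    have ex: "x = (\<Sum>b\<in>C. (inner b x / inner b b) *\<^sub>R b)" using expand x by blast
    show "x \<in> K" unfolding K_def
      apply (rule CollectI, rule exI[where x="\<lambda>b. inner b x / inner b b"], rule conjI)
       apply (rule ex)
      using bnd by blast
  qed
  define S where "S = K \<inter> sphere 0 1"
  have cS: "compact S" unfolding S_def sphere_def dist_0_norm by (rule compact_Int_closed[OF cK], rule closed_Collect_eq) (intro continuous_intros)+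
  have SW: "S = W \<inter> sphere 0 1" using KW sphK by (auto simp: S_def)
  obtain x0 where x0: "x0 \<in> W" "x0 \<noteq> 0" using ne subW subspace_0 by blast
  have "x0 /\<^sub>R norm x0 \<in> S" using x0 subW by (simp add: SW subspace_scale)
  then have Sne: "S \<noteq> {}" by blast
  define L where "L x = (\<Sum>b\<in>C. (inner b x / inner b b) *\<^sub>R D b)" for x
  have cont: "continuous_on S (\<lambda>x. norm (L x))" unfolding L_def using C(4) by (intro continuous_intros) auto
  obtain w where w: "w \<in> S" "\<forall>y\<in>S. norm (L y) \<le> norm (L w)"
    using continuous_attains_sup[OF cS Sne cont] by blast
  have LD: "L x = D x" if "x \<in> W" for x
  proof -
    have "D x = D (\<Sum>b\<in>C. (inner b x / inner b b) *\<^sub>R b)" using expand[OF that] by simp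
    also have "\<dots> = (\<Sum>b\<in>C. D ((inner b x / inner b b) *\<^sub>R b))"
      apply (rule lin_sum[OF lin subW C(1)])
      using C(2) span_base span_scale by metis
    also have "\<dots> = L x" unfolding L_def
      apply (rule sum.cong[OF refl], rule lin_scale[OF lin])
      using C(2) span_base by metis
    finally show ?thesis by simp
  qed
  show ?thesis using w LD SW by (intro bexI[of _ w]) auto
qed

lemma max_eigen:
  fixes W :: "'a::real_inner set" and D :: "'a \<Rightarrow> 'c::real_inner"
  assumes sub: "subspace W" and lin: "linear_on_dom W D" and w: "w \<in> W" "norm w = 1"
    and mx: "\<forall>x\<in>W. norm x = 1 \<longrightarrow> norm (D x) \<le> norm (D w)"
  shows "\<forall>v\<in>W. inner (D w) (D v) = (norm (D w))^2 * inner w v"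
proof
  fix v assume v: "v \<in> W"
  define M where "M = (norm (D w))^2"
  have gen: "inner (D x) (D x) \<le> M * inner x x" if x: "x \<in> W" for x
  proof (cases "x = 0")
    case True then show ?thesis using lin_zero[OF lin sub] by simp
  next
    case False
    have "norm (D ((1 / norm x) *\<^sub>R x)) \<le> norm (D w)" using mx x sub False by (simp add: subspace_scale)
    then have "norm (D x) / norm x \<le> norm (D w)" using lin_scale[OF lin x] by simp
    then have "norm (D x) \<le> norm (D w) * norm x" using False by (simp add: divide_le_eq)
    then have "(norm (D x))^2 \<le> (norm (D w) * norm x)^2" by (intro power_mono) auto
    then show ?thesis by (simp add: M_def power2_norm_eq_inner[symmetric] power_mult_distrib)
  qed
  define a where "a = inner (D w) (D v)"
  define b where "b = inner w v"
  define e where "e = inner (D v) (D v) - M * inner v v"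
  have key: "2 * t * (a - M * b) + t^2 * e \<le> 0" for t
  proof -
    have xw: "w + t *\<^sub>R v \<in> W" using sub w v by (simp add: subspace_add subspace_scale)
    have Dx: "D (w + t *\<^sub>R v) = D w + t *\<^sub>R D v"
      using lin_add[OF lin w(1), of "t *\<^sub>R v"] lin_scale[OF lin v] sub v by (simp add: subspace_scale)
    have ww: "inner w w = 1" using w(2) by (simp add: power2_norm_eq_inner[symmetric])
    have DwDw: "inner (D w) (D w) = M" by (simp add: M_def power2_norm_eq_inner)
    have "inner (D (w + t *\<^sub>R v)) (D (w + t *\<^sub>R v)) \<le> M * inner (w + t *\<^sub>R v) (w + t *\<^sub>R v)"
      by (rule gen[OF xw])
    then have "M + 2 * t * a + t^2 * inner (D v) (D v) \<le> M * (1 + 2 * t * b + t^2 * inner v v)"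
      unfolding Dx by (simp add: inner_add_left inner_add_right ww DwDw a_def b_def inner_commute power2_eq_square algebra_simps)
    then show ?thesis by (simp add: e_def algebra_simps)
  qed
  define c where "c = a - M * b"
  define s where "s = \<bar>e\<bar> + 1"
  have s: "s > 0" by (simp add: s_def)
  have "2 * (c / s) * c + (c / s)^2 * e \<le> 0" using key[of "c / s"] by (simp add: c_def)
  moreover have "(2 * (c / s) * c + (c / s)^2 * e) * s^2 = c^2 * (2 * s + e)"
    using s by (simp add: field_simps power2_eq_square)
  ultimately have "c^2 * (2 * s + e) \<le> 0"
    by (metis mult_nonpos_nonneg zero_le_power2)
  moreover have "2 * s + e > 0" unfolding s_def by (cases "e \<ge> 0") auto
  ultimately have "c^2 \<le> 0" by (simp add: mult_le_0_iff)
  then have "c = 0" by simp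
  then show "inner (D w) (D v) = (norm (D w))^2 * inner w v" by (simp add: c_def a_def b_def M_def)
qed

lemma eig_span:
  fixes Z :: "'a::real_inner set" and D :: "'a \<Rightarrow> 'c::real_inner"
  assumes T: "finite T" "Z = span T" and lin: "linear_on_dom Z D"
    and inj: "\<forall>x\<in>Z. D x = 0 \<longrightarrow> x = 0"
  shows "Z \<subseteq> span {w\<in>Z. w \<noteq> 0 \<and> (\<exists>\<mu>>0. \<forall>v\<in>Z. inner (D w) (D v) = \<mu> * inner w v)}"
proof -
  define E where "E = {w\<in>Z. w \<noteq> 0 \<and> (\<exists>\<mu>>0. \<forall>v\<in>Z. inner (D w) (D v) = \<mu> * inner w v)}"
  have subZ: "subspace Z" using T by simp
  obtain B where B: "B \<subseteq> E" "independent B" "E \<subseteq> span B"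
    using maximal_independent_subset[of E] by blast
  have EZ: "E \<subseteq> Z" by (auto simp: E_def)
  have fB: "finite B" using independent_span_bound[OF T(1) B(2)] B(1) EZ T(2) by blast
  have spB: "span B \<subseteq> Z" using B(1) EZ subZ span_minimal by (metis subset_trans)
  define W where "W = {x\<in>Z. \<forall>e\<in>B. inner x e = 0}"
  have subW: "subspace W" using subZ unfolding W_def subspace_def
    by (auto simp: inner_add_left)
  have WZ: "W \<subseteq> Z" by (auto simp: W_def)
  obtain TW where TW: "finite TW" "W = span TW" using findim_sub[OF T(1) subW] WZ T(2) by blast
  have decomp: "\<exists>y\<in>span B. v - y \<in> W" if v: "v \<in> Z" for v
  proof -
    obtain y where y: "y \<in> span B" "\<forall>s\<in>span B. inner (v - y) s = 0" using orth_decomp[OF fB] by blast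
    have "v - y \<in> Z" using v y(1) spB subZ by (meson subsetD subspace_diff)
    then have "v - y \<in> W" using y(2) by (auto simp: W_def intro: span_base)
    then show ?thesis using y(1) by blast
  qed
  have W0: "W = {0}"
  proof (rule ccontr)
    assume ne: "W \<noteq> {0}"
    have linW: "linear_on_dom W D" using lin_mono[OF lin WZ] .
    obtain w where w: "w \<in> W" "norm w = 1" "\<forall>x\<in>W. norm x = 1 \<longrightarrow> norm (D x) \<le> norm (D w)"
      using max_exists[OF TW linW ne] by blast
    define M where "M = (norm (D w))^2"
    have eW: "\<forall>v\<in>W. inner (D w) (D v) = M * inner w v"
      using max_eigen[OF subW linW w] unfolding M_def .
    have wZ: "w \<in> Z" using w WZ by blast
    have orthB: "inner w y = 0" if "y \<in> span B" for y
      using orthogonal_to_span[OF that, of w] w(1) by (auto simp: W_def orthogonal_def)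
    have DB: "inner (D w) (D y) = 0" if "y \<in> span B" for y
    proof -
      define P where "P = {y\<in>Z. inner (D w) (D y) = 0}"
      have subP: "subspace P" unfolding P_def subspace_def
        using subZ lin_zero[OF lin subZ] lin_add[OF lin] lin_scale[OF lin]
        by (auto simp: subspace_def inner_add_right)
      have "B \<subseteq> P"
      proof
        fix e assume e: "e \<in> B"
        then have eE: "e \<in> E" using B(1) by blast
        then obtain \<mu> where "\<forall>v\<in>Z. inner (D e) (D v) = \<mu> * inner e v" by (auto simp: E_def)
        then have "inner (D e) (D w) = \<mu> * inner e w" using wZ by blast
        moreover have "inner e w = 0" using w(1) e by (auto simp: W_def inner_commute)
        ultimately show "e \<in> P" using eE EZ by (auto simp: P_def inner_commute)
      qed
      then have "span B \<subseteq> P" using subP span_minimal by blast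
      then show ?thesis using that by (auto simp: P_def)
    qed
    have w0: "w \<noteq> 0" using w(2) by auto
    have Mpos: "M > 0" using inj wZ w0 by (auto simp: M_def)
    have "w \<in> E"
    proof -
      have "inner (D w) (D v) = M * inner w v" if v: "v \<in> Z" for v
      proof -
        obtain y where y: "y \<in> span B" "v - y \<in> W" using decomp[OF v] by blast
        have yZ: "y \<in> Z" using y(1) spB by blast
        have "D v = D (v - y) + D y" using lin_add[OF lin, of "v - y" y] y(2) WZ yZ by auto
        then have "inner (D w) (D v) = inner (D w) (D (v - y)) + inner (D w) (D y)"
          by (simp add: inner_add_right)
        also have "\<dots> = M * inner w (v - y)" using eW y DB by simp
        also have "\<dots> = M * inner w v" using orthB[OF y(1)] by (simp add: inner_diff_right)
        finally show ?thesis .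
      qed
      then show ?thesis using wZ w0 Mpos by (auto simp: E_def)
    qed
    then have "w \<in> span B" using B(3) by blast
    then have "inner w w = 0" using orthB by blast
    then show False using w0 by simp
  qed
  show ?thesis unfolding E_def[symmetric]
  proof
    fix v assume v: "v \<in> Z"
    obtain y where y: "y \<in> span B" "v - y \<in> W" using decomp[OF v] by blast
    then have "v = y" using W0 by simp
    then have "v \<in> span B" using y by simp
    then show "v \<in> span E" using span_mono[OF B(1)] by blast
  qed
qed

lemma arith1: fixes g l e st :: real assumes "g > 0" "l \<noteq> 0" "l \<noteq> 1" "l \<noteq> -1"
  "(g / l) * e - st = l * (st + g * e)" shows "e = l / (g * (1 - l)) * st"
proof -
  have m: "l * ((g / l) * e - st) = l * (l * (st + g * e))" by (simp only: assms(5))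
  have "l * ((g / l) * e - st) = g * e - l * st" using assms(2) by (simp add: algebra_simps)
  then have "g * e - l * st = l * l * st + l * l * g * e" using m by (simp add: algebra_simps)
  moreover have "g * e * ((1 - l) * (1 + l)) - l * st * (1 + l) = (g * e - l * st) - (l * l * st + l * l * g * e)"
    by (simp add: algebra_simps)
  ultimately have "g * e * ((1 - l) * (1 + l)) = l * st * (1 + l)" by simp
  then have "g * e * (1 - l) = l * st" using assms(4) by (simp add: add_eq_0_iff)
  then show ?thesis using assms(1,3) by (simp add: field_simps)
qed
lemma arith2: fixes g l a b :: real assumes "g > 0" "l \<noteq> 1" "a = l * (inverse g * b + a)"
  shows "a = l / (g * (1 - l)) * b"
proof -
  have "a * (1 - l) = l * b / g" using assms(3) by (simp add: algebra_simps divide_inverse)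
  then show ?thesis using assms(1,2) by (simp add: field_simps)
qed

locale setting =
  fixes V0 :: "'a::real_inner set" and V1 :: "'b::real_inner set"
    and d0 :: "'a \<Rightarrow> 'b" and d1 :: "'b \<Rightarrow> 'c::real_inner" and \<gamma> :: real
  assumes V0: "fin_dim_subspace V0" and V1: "fin_dim_subspace V1"
    and d0_lin: "linear_on_dom V0 d0" and d1_lin: "linear_on_dom V1 d1"
    and d0_into: "d0 ` V0 \<subseteq> V1"
    and complex: "\<forall>\<sigma>\<in>V0. d1 (d0 \<sigma>) = 0"
    and gamma: "\<gamma> > 0"
begin

abbreviation "H \<equiv> harmonic V0 V1 d0 d1"
abbreviation "Z0 \<equiv> Zperp V0 d0"
abbreviation "Z1 \<equiv> Zperp V1 d1"
abbreviation "K0 \<equiv> {x\<in>V0. d0 x = 0}"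
abbreviation "K1 \<equiv> {x\<in>V1. d1 x = 0}"
abbreviation "P \<equiv> orth_proj H"

lemma sub0: "subspace V0" using V0 by (simp add: fin_dim_subspace_def)
lemma sub1: "subspace V1" using V1 by (simp add: fin_dim_subspace_def)
lemma fin0: obtains F where "finite F" "V0 = span F" using V0 by (auto simp: fin_dim_subspace_def)
lemma fin1: obtains F where "finite F" "V1 = span F" using V1 by (auto simp: fin_dim_subspace_def)

lemma findim0: assumes "subspace W" "W \<subseteq> V0" obtains T where "finite T" "W = span T"
proof -
  obtain F where "finite F" "V0 = span F" by (rule fin0)
  then show ?thesis using findim_sub[of F W] assms that by blast
qed
lemma findim1: assumes "subspace W" "W \<subseteq> V1" obtains T where "finite T" "W = span T"
proof -
  obtain F where "finite F" "V1 = span F" by (rule fin1)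
  then show ?thesis using findim_sub[of F W] assms that by blast
qed

lemma d0_add: "x \<in> V0 \<Longrightarrow> y \<in> V0 \<Longrightarrow> d0 (x + y) = d0 x + d0 y" using lin_add[OF d0_lin] .
lemma d0_scale: "x \<in> V0 \<Longrightarrow> d0 (c *\<^sub>R x) = c *\<^sub>R d0 x" using lin_scale[OF d0_lin] .
lemma d0_zero[simp]: "d0 0 = 0" using lin_zero[OF d0_lin sub0] .
lemma d0_diff: "x \<in> V0 \<Longrightarrow> y \<in> V0 \<Longrightarrow> d0 (x - y) = d0 x - d0 y" using lin_diff[OF d0_lin sub0] .
lemma d1_add: "x \<in> V1 \<Longrightarrow> y \<in> V1 \<Longrightarrow> d1 (x + y) = d1 x + d1 y" using lin_add[OF d1_lin] .
lemma d1_scale: "x \<in> V1 \<Longrightarrow> d1 (c *\<^sub>R x) = c *\<^sub>R d1 x" using lin_scale[OF d1_lin] .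
lemma d1_zero[simp]: "d1 0 = 0" using lin_zero[OF d1_lin sub1] .
lemma d1_diff: "x \<in> V1 \<Longrightarrow> y \<in> V1 \<Longrightarrow> d1 (x - y) = d1 x - d1 y" using lin_diff[OF d1_lin sub1] .

lemma d0V1: "x \<in> V0 \<Longrightarrow> d0 x \<in> V1" using d0_into by blast
lemma V0_0[simp]: "0 \<in> V0" using sub0 subspace_0 by blast
lemma V1_0[simp]: "0 \<in> V1" using sub1 subspace_0 by blast
lemma V0_add: "x \<in> V0 \<Longrightarrow> y \<in> V0 \<Longrightarrow> x + y \<in> V0" using sub0 subspace_add by blast
lemma V0_diff: "x \<in> V0 \<Longrightarrow> y \<in> V0 \<Longrightarrow> x - y \<in> V0" using sub0 subspace_diff by blast
lemma V0_scale: "x \<in> V0 \<Longrightarrow> c *\<^sub>R x \<in> V0" using sub0 subspace_scale by blast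
lemma V1_add: "x \<in> V1 \<Longrightarrow> y \<in> V1 \<Longrightarrow> x + y \<in> V1" using sub1 subspace_add by blast
lemma V1_diff: "x \<in> V1 \<Longrightarrow> y \<in> V1 \<Longrightarrow> x - y \<in> V1" using sub1 subspace_diff by blast
lemma V1_scale: "x \<in> V1 \<Longrightarrow> c *\<^sub>R x \<in> V1" using sub1 subspace_scale by blast
lemma V1_neg: "x \<in> V1 \<Longrightarrow> - x \<in> V1" using sub1 subspace_neg by blast

lemma subH: "subspace H"
  unfolding subspace_def harmonic_def
  using d1_add d1_scale V1_add V1_scale by (auto simp: inner_add_left)
lemma H_V1: "h \<in> H \<Longrightarrow> h \<in> V1" by (simp add: harmonic_def)
lemma H_d1: "h \<in> H \<Longrightarrow> d1 h = 0" by (simp add: harmonic_def)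
lemma H_R: "h \<in> H \<Longrightarrow> \<sigma> \<in> V0 \<Longrightarrow> inner h (d0 \<sigma>) = 0" by (simp add: harmonic_def)
lemma H_0[simp]: "0 \<in> H" using subH subspace_0 by blast
lemma finH: obtains T where "finite T" "H = span T"
  using findim1[OF subH] H_V1 by blast

lemma PH: "P v \<in> H" "s \<in> H \<Longrightarrow> inner (v - P v) s = 0"
proof -
  obtain T where "finite T" "H = span T" by (rule finH)
  from orth_proj_char[OF this] show "P v \<in> H" "s \<in> H \<Longrightarrow> inner (v - P v) s = 0" by auto
qed
lemma P_eq: "p \<in> H \<Longrightarrow> (\<And>s. s \<in> H \<Longrightarrow> inner (v - p) s = 0) \<Longrightarrow> P v = p"
proof -
  assume a: "p \<in> H" "\<And>s. s \<in> H \<Longrightarrow> inner (v - p) s = 0"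
  obtain T where "finite T" "H = span T" by (rule finH)
  from orth_proj_eq[OF this a(1)] a(2) show ?thesis by blast
qed

lemma subZ1: "subspace Z1"
  unfolding subspace_def Zperp_def
  using V1_add V1_scale by (auto simp: inner_add_left)
lemma subZ0: "subspace Z0"
  unfolding subspace_def Zperp_def
  using V0_add V0_scale by (auto simp: inner_add_left)
lemma subK1: "subspace K1"
  unfolding subspace_def using V1_add V1_scale d1_add d1_scale by auto
lemma subK0: "subspace K0"
  unfolding subspace_def using V0_add V0_scale d0_add d0_scale by auto
lemma subR: "subspace (d0 ` V0)"
  unfolding subspace_def using V0_add V0_scale d0_add d0_scale
  by (auto simp: image_iff) (metis V0_0 d0_zero, metis, metis)

lemma Z1_V1: "w \<in> Z1 \<Longrightarrow> w \<in> V1" by (simp add: Zperp_def)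
lemma Z0_V0: "w \<in> Z0 \<Longrightarrow> w \<in> V0" by (simp add: Zperp_def)
lemma Z1_K1: "w \<in> Z1 \<Longrightarrow> z \<in> V1 \<Longrightarrow> d1 z = 0 \<Longrightarrow> inner w z = 0" by (simp add: Zperp_def)
lemma Z0_K0: "w \<in> Z0 \<Longrightarrow> z \<in> V0 \<Longrightarrow> d0 z = 0 \<Longrightarrow> inner w z = 0" by (simp add: Zperp_def)
lemma Z1_H: "w \<in> Z1 \<Longrightarrow> h \<in> H \<Longrightarrow> inner w h = 0" using Z1_K1 H_V1 H_d1 by blast
lemma Z1_R: "w \<in> Z1 \<Longrightarrow> \<sigma> \<in> V0 \<Longrightarrow> inner w (d0 \<sigma>) = 0" using Z1_K1 d0V1 complex by blast
lemma Z1_inj: "w \<in> Z1 \<Longrightarrow> d1 w = 0 \<Longrightarrow> w = 0" using Z1_K1 Z1_V1 by fastforce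
lemma Z0_inj: "w \<in> Z0 \<Longrightarrow> d0 w = 0 \<Longrightarrow> w = 0" using Z0_K0 Z0_V0 by fastforce

lemma decK1: assumes "v \<in> V1" obtains z where "z \<in> V1" "d1 z = 0" "v - z \<in> Z1"
proof -
  obtain T where T: "finite T" "K1 = span T" using findim1[OF subK1] by blast
  obtain z where z: "z \<in> span T" "\<forall>s\<in>span T. inner (v - z) s = 0" using orth_decomp[OF T(1)] by blast
  have "z \<in> K1" using z T by simp
  moreover have "v - z \<in> Z1" using z T assms \<open>z \<in> K1\<close> V1_diff by (auto simp: Zperp_def)
  ultimately show ?thesis using that by blast
qed
lemma decK0: assumes "v \<in> V0" obtains z where "z \<in> V0" "d0 z = 0" "v - z \<in> Z0"
proof -
  obtain T where T: "finite T" "K0 = span T" using findim0[OF subK0] by blast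
  obtain z where z: "z \<in> span T" "\<forall>s\<in>span T. inner (v - z) s = 0" using orth_decomp[OF T(1)] by blast
  have "z \<in> K0" using z T by simp
  moreover have "v - z \<in> Z0" using z T assms \<open>z \<in> K0\<close> V0_diff by (auto simp: Zperp_def)
  ultimately show ?thesis using that by blast
qed

lemma KHR: assumes "x \<in> V1" "d1 x = 0" "\<And>h. h \<in> H \<Longrightarrow> inner x h = 0"
  obtains \<rho> where "\<rho> \<in> V0" "x = d0 \<rho>"
proof -
  obtain T where T: "finite T" "d0 ` V0 = span T" using findim1[OF subR] d0_into by blast
  obtain y where y: "y \<in> span T" "\<forall>s\<in>span T. inner (x - y) s = 0" using orth_decomp[OF T(1)] by blast
  obtain \<rho> where \<rho>: "\<rho> \<in> V0" "y = d0 \<rho>" using y(1) T(2) by auto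
  have e: "x - y \<in> H" unfolding harmonic_def
    using assms \<rho> y(2) T(2) d1_diff d0V1 complex V1_diff by auto
  have "inner (x - y) (x - y) = inner x (x - y) - inner y (x - y)" by (simp add: inner_diff_left)
  also have "\<dots> = 0"
  proof -
    have "y \<in> span T" using y(1) .
    then show ?thesis using assms(3)[OF e] y(2) by (simp add: inner_commute)
  qed
  finally have "x = y" by simp
  then show ?thesis using \<rho> that by blast
qed

lemma decV1: assumes "v \<in> V1"
  obtains \<rho> w where "\<rho> \<in> V0" "w \<in> Z1" "v = d0 \<rho> + P v + w"
proof -
  obtain z where z: "z \<in> V1" "d1 z = 0" "v - z \<in> Z1" using decK1[OF assms] by blast
  define h where "h = P z"
  have h: "h \<in> H" by (simp add: h_def PH)
  have "z - h \<in> V1" using z h H_V1 V1_diff by blast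
  moreover have "d1 (z - h) = 0" using z h H_V1 H_d1 d1_diff by simp
  moreover have "inner (z - h) s = 0" if "s \<in> H" for s using PH(2) that h_def by simp
  ultimately obtain \<rho> where \<rho>: "\<rho> \<in> V0" "z - h = d0 \<rho>" using KHR by blast
  have "P v = h"
  proof (rule P_eq[OF h])
    fix s assume s: "s \<in> H"
    have eq: "v - h = d0 \<rho> + (v - z)" using \<rho> by (simp add: algebra_simps)
    show "inner (v - h) s = 0"
      unfolding eq inner_add_left using s H_R[OF s \<rho>(1)] Z1_H[OF z(3) s] by (simp add: inner_commute)
  qed
  then have "v = d0 \<rho> + P v + (v - z)" using \<rho> by (simp add: algebra_simps)
  then show ?thesis using that \<rho>(1) z(3) by blast
qed

lemma formA_eq: "formA d0 d1 (\<sigma>, u, p) (\<tau>, v, q) =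
   inner (d1 u) (d1 v) + inner (d0 \<sigma>) v + inner u (d0 \<tau>) - inner \<sigma> \<tau> + inner p v + inner u q"
  by (simp add: formA_def)
lemma formB_eq: "formB V0 V1 d0 d1 \<gamma> (\<sigma>, u, p) (\<tau>, v, q) =
   inverse \<gamma> * inner (u - P u) (v - P v) + inner (P u) (P v) + inner (d1 u) (d1 v)
        + inner \<sigma> \<tau> + \<gamma> * inner (d0 \<sigma>) (d0 \<tau>) + inner p q"
  by (simp add: formB_def Let_def)

lemma mixed_iff: "(x, y, z) \<in> mixed_space V0 V1 d0 d1 \<longleftrightarrow> x \<in> V0 \<and> y \<in> V1 \<and> z \<in> H"
  by (simp add: mixed_space_def)

lemma P_zero_Z1: "w \<in> Z1 \<Longrightarrow> P w = 0"
  by (rule P_eq) (auto simp: Z1_H)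
lemma P_zero_R: "\<sigma> \<in> V0 \<Longrightarrow> P (c *\<^sub>R d0 \<sigma>) = 0"
  by (rule P_eq) (auto simp: inner_commute H_R)
lemma P_H: "h \<in> H \<Longrightarrow> P h = h"
  by (rule P_eq) auto
lemma P_inner: "h \<in> H \<Longrightarrow> inner h (P v) = inner h v"
  using PH(2)[of h v] by (simp add: inner_diff_left inner_diff_right inner_commute)

lemma ratio: assumes "lam \<noteq> 1" shows "(lam / (\<gamma> * (1 - lam))) * \<gamma> / ((lam / (\<gamma> * (1 - lam))) * \<gamma> + 1) = lam"
  using assms gamma by (simp add: field_simps)

end

context setting begin

lemma part1: assumes s: "\<sigma> \<in> V0" "\<sigma> \<noteq> 0"
  shows "is_eigenpair V0 V1 d0 d1 \<gamma> (-1) (\<sigma>, - \<gamma> *\<^sub>R d0 \<sigma>, 0)"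
  unfolding is_eigenpair_def
proof (intro conjI ballI)
  show "(\<sigma>, - \<gamma> *\<^sub>R d0 \<sigma>, 0) \<in> mixed_space V0 V1 d0 d1"
    using s d0V1 V1_scale V1_neg by (simp add: mixed_iff)
  show "(\<sigma>, - \<gamma> *\<^sub>R d0 \<sigma>, 0) \<noteq> 0" using s by (simp add: zero_prod_def)
  fix y assume y: "y \<in> mixed_space V0 V1 d0 d1"
  obtain \<tau> v q where yy: "y = (\<tau>, v, q)" by (cases y) auto
  have yin: "\<tau> \<in> V0" "v \<in> V1" "q \<in> H" using y yy by (auto simp: mixed_iff)
  have P0: "P (- \<gamma> *\<^sub>R d0 \<sigma>) = 0" using P_zero_R[OF s(1), of "- \<gamma>"] by simp
  have D0: "d1 (- \<gamma> *\<^sub>R d0 \<sigma>) = 0" using d1_scale[OF d0V1[OF s(1)], of "- \<gamma>"] complex s by simp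
  have o1: "inner (d0 \<sigma>) q = 0" using H_R[OF yin(3) s(1)] by (simp add: inner_commute)
  have o2: "inner (d0 \<sigma>) (P v) = 0" using H_R[OF PH(1) s(1)] by (simp add: inner_commute)
  show "formA d0 d1 (\<sigma>, - \<gamma> *\<^sub>R d0 \<sigma>, 0) y = - 1 * formB V0 V1 d0 d1 \<gamma> (\<sigma>, - \<gamma> *\<^sub>R d0 \<sigma>, 0) y"
    unfolding yy formA_eq formB_eq P0 D0 using o1 o2 gamma
    by (simp add: inner_diff_right field_simps)
qed

lemma part2: assumes p: "p \<in> H" "p \<noteq> 0" and l: "l \<in> {1, -1::real}"
  shows "is_eigenpair V0 V1 d0 d1 \<gamma> l (0, l *\<^sub>R p, p)"
  unfolding is_eigenpair_def
proof (intro conjI ballI)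
  show "(0, l *\<^sub>R p, p) \<in> mixed_space V0 V1 d0 d1"
    using p H_V1 V1_scale by (simp add: mixed_iff)
  show "(0, l *\<^sub>R p, p) \<noteq> 0" using p by (simp add: zero_prod_def)
  fix y assume y: "y \<in> mixed_space V0 V1 d0 d1"
  obtain \<tau> v q where yy: "y = (\<tau>, v, q)" by (cases y) auto
  have yin: "\<tau> \<in> V0" "v \<in> V1" "q \<in> H" using y yy by (auto simp: mixed_iff)
  have lp: "l *\<^sub>R p \<in> H" using p subH subspace_scale by blast
  have P0: "P (l *\<^sub>R p) = l *\<^sub>R p" using P_H[OF lp] .
  have D0: "d1 (l *\<^sub>R p) = 0" using H_d1[OF lp] .
  have o1: "inner p (d0 \<tau>) = 0" using H_R[OF p(1) yin(1)] .
  have o2: "inner p (P v) = inner p v" using P_inner[OF p(1)] .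
  have ll: "l * l = 1" using l by auto
  show "formA d0 d1 (0, l *\<^sub>R p, p) y = l * formB V0 V1 d0 d1 \<gamma> (0, l *\<^sub>R p, p) y"
    unfolding yy formA_eq formB_eq P0 D0 using o1 o2 ll
    by (simp add: algebra_simps)
qed

lemma Z1_eq: assumes "u \<in> Z1" "v \<in> V1" "\<forall>v\<in>Z1. inner (d1 u) (d1 v) = \<mu> * inner u v"
  shows "inner (d1 u) (d1 v) = \<mu> * inner u v"
proof -
  obtain z where z: "z \<in> V1" "d1 z = 0" "v - z \<in> Z1" using decK1[OF assms(2)] by blast
  have "d1 v = d1 (v - z)" using d1_diff[OF assms(2) z(1)] z(2) by simp
  then have "inner (d1 u) (d1 v) = \<mu> * inner u (v - z)" using assms(3) z(3) by simp
  also have "\<dots> = \<mu> * inner u v" using Z1_K1[OF assms(1) z(1,2)] by (simp add: inner_diff_right)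
  finally show ?thesis .
qed

lemma Z0_eq: assumes "u \<in> Z0" "v \<in> V0" "\<forall>v\<in>Z0. inner (d0 u) (d0 v) = \<mu> * inner u v"
  shows "inner (d0 u) (d0 v) = \<mu> * inner u v"
proof -
  obtain z where z: "z \<in> V0" "d0 z = 0" "v - z \<in> Z0" using decK0[OF assms(2)] by blast
  have "d0 v = d0 (v - z)" using d0_diff[OF assms(2) z(1)] z(2) by simp
  then have "inner (d0 u) (d0 v) = \<mu> * inner u (v - z)" using assms(3) z(3) by simp
  also have "\<dots> = \<mu> * inner u v" using Z0_K0[OF assms(1) z(1,2)] by (simp add: inner_diff_right)
  finally show ?thesis .
qed

lemma part3: assumes u: "u \<in> Z1" "u \<noteq> 0" and mu: "\<mu> > 0"
    and eq: "\<forall>v\<in>Z1. inner (d1 u) (d1 v) = \<mu> * inner u v"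
  shows "is_eigenpair V0 V1 d0 d1 \<gamma> (\<mu> * \<gamma> / (\<mu> * \<gamma> + 1)) (0, u, 0)"
  unfolding is_eigenpair_def
proof (intro conjI ballI)
  show "(0, u, 0) \<in> mixed_space V0 V1 d0 d1" using u Z1_V1 by (simp add: mixed_iff)
  show "(0, u, 0) \<noteq> 0" using u by (simp add: zero_prod_def)
  fix y assume y: "y \<in> mixed_space V0 V1 d0 d1"
  obtain \<tau> v q where yy: "y = (\<tau>, v, q)" by (cases y) auto
  have yin: "\<tau> \<in> V0" "v \<in> V1" "q \<in> H" using y yy by (auto simp: mixed_iff)
  have P0: "P u = 0" using P_zero_Z1[OF u(1)] .
  have o1: "inner u (d0 \<tau>) = 0" using Z1_R[OF u(1) yin(1)] .
  have o2: "inner u q = 0" using Z1_H[OF u(1) yin(3)] .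
  have o3: "inner u (P v) = 0" using Z1_H[OF u(1) PH(1)] .
  have e: "inner (d1 u) (d1 v) = \<mu> * inner u v" using Z1_eq[OF u(1) yin(2) eq] .
  show "formA d0 d1 (0, u, 0) y = (\<mu> * \<gamma> / (\<mu> * \<gamma> + 1)) * formB V0 V1 d0 d1 \<gamma> (0, u, 0) y"
  proof -
    have A: "formA d0 d1 (0, u, 0) (\<tau>, v, q) = \<mu> * inner u v"
      unfolding formA_eq using o1 o2 e by simp
    have B: "formB V0 V1 d0 d1 \<gamma> (0, u, 0) (\<tau>, v, q) = (inverse \<gamma> + \<mu>) * inner u v"
      unfolding formB_eq P0 using o3 e by (simp add: inner_diff_right algebra_simps)
    have "0 < \<mu> * \<gamma>" using gamma mu by simp
    then have d: "\<mu> * \<gamma> + 1 \<noteq> 0" by linarith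
    have e1: "inverse \<gamma> + \<mu> = (\<mu> * \<gamma> + 1) / \<gamma>" using gamma by (simp add: field_simps)
    have r: "\<mu> * \<gamma> / (\<mu> * \<gamma> + 1) * (inverse \<gamma> + \<mu>) = \<mu>"
      unfolding e1 using d gamma by simp
    show ?thesis unfolding yy A B using r by (metis mult.assoc)
  qed
qed

lemma part4: assumes s: "\<sigma> \<in> Z0" "\<sigma> \<noteq> 0" and nu: "\<nu> > 0"
    and eq: "\<forall>\<tau>\<in>Z0. inner (d0 \<sigma>) (d0 \<tau>) = \<nu> * inner \<sigma> \<tau>"
  shows "is_eigenpair V0 V1 d0 d1 \<gamma> (\<nu> * \<gamma> / (\<nu> * \<gamma> + 1))
           (\<sigma>, (\<gamma> / (\<nu> * \<gamma> / (\<nu> * \<gamma> + 1))) *\<^sub>R d0 \<sigma>, 0)"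
  unfolding is_eigenpair_def
proof (intro conjI ballI)
  define c where "c = \<gamma> / (\<nu> * \<gamma> / (\<nu> * \<gamma> + 1))"
  have sV: "\<sigma> \<in> V0" using s Z0_V0 by blast
  show "(\<sigma>, c *\<^sub>R d0 \<sigma>, 0) \<in> mixed_space V0 V1 d0 d1"
    using sV d0V1 V1_scale by (simp add: mixed_iff)
  show "(\<sigma>, c *\<^sub>R d0 \<sigma>, 0) \<noteq> 0" using s by (simp add: zero_prod_def)
  fix y assume y: "y \<in> mixed_space V0 V1 d0 d1"
  obtain \<tau> v q where yy: "y = (\<tau>, v, q)" by (cases y) auto
  have yin: "\<tau> \<in> V0" "v \<in> V1" "q \<in> H" using y yy by (auto simp: mixed_iff)
  have P0: "P (c *\<^sub>R d0 \<sigma>) = 0" using P_zero_R[OF sV] .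
  have D0: "d1 (c *\<^sub>R d0 \<sigma>) = 0" using d1_scale[OF d0V1[OF sV], of c] complex sV by simp
  have o1: "inner (d0 \<sigma>) q = 0" using H_R[OF yin(3) sV] by (simp add: inner_commute)
  have o2: "inner (d0 \<sigma>) (P v) = 0" using H_R[OF PH(1) sV] by (simp add: inner_commute)
  have e: "inner (d0 \<sigma>) (d0 \<tau>) = \<nu> * inner \<sigma> \<tau>" using Z0_eq[OF s(1) yin(1) eq] .
  have c: "c = (\<nu> * \<gamma> + 1) / \<nu>"
  proof -
    have "0 < \<nu> * \<gamma>" using gamma nu by simp
    then have d: "\<nu> * \<gamma> + 1 \<noteq> 0" by linarith
    then show ?thesis using nu gamma unfolding c_def by (simp add: field_simps)
  qed
  show "formA d0 d1 (\<sigma>, c *\<^sub>R d0 \<sigma>, 0) y = (\<nu> * \<gamma> / (\<nu> * \<gamma> + 1)) * formB V0 V1 d0 d1 \<gamma> (\<sigma>, c *\<^sub>R d0 \<sigma>, 0) y"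
    unfolding c_def[symmetric]
  proof -
    define lam where "lam = \<nu> * \<gamma> / (\<nu> * \<gamma> + 1)"
    have A: "formA d0 d1 (\<sigma>, c *\<^sub>R d0 \<sigma>, 0) (\<tau>, v, q) = inner (d0 \<sigma>) v + (c * \<nu> - 1) * inner \<sigma> \<tau>"
      unfolding formA_eq D0 using o1 e by (simp add: algebra_simps)
    have B: "formB V0 V1 d0 d1 \<gamma> (\<sigma>, c *\<^sub>R d0 \<sigma>, 0) (\<tau>, v, q) =
        inverse \<gamma> * c * inner (d0 \<sigma>) v + (1 + \<gamma> * \<nu>) * inner \<sigma> \<tau>"
      unfolding formB_eq P0 D0 using o2 e by (simp add: inner_diff_right algebra_simps)
    have "0 < \<nu> * \<gamma>" using gamma nu by simp
    then have d: "\<nu> * \<gamma> + 1 \<noteq> 0" by linarith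
    have pp: "0 < \<gamma> * \<nu> + \<gamma> * (\<gamma> * (\<nu> * \<nu>))" using gamma nu by (simp add: add_pos_pos)
    have r1: "lam * (inverse \<gamma> * c) = 1" using gamma nu d pp unfolding lam_def c by (simp add: field_simps)
    have r2: "lam * (1 + \<gamma> * \<nu>) = c * \<nu> - 1" using gamma nu d unfolding lam_def c
      by (simp add: field_simps)
    have "lam * (inverse \<gamma> * c * inner (d0 \<sigma>) v + (1 + \<gamma> * \<nu>) * inner \<sigma> \<tau>)
        = (lam * (inverse \<gamma> * c)) * inner (d0 \<sigma>) v + (lam * (1 + \<gamma> * \<nu>)) * inner \<sigma> \<tau>"
      by (simp add: algebra_simps)
    also have "\<dots> = inner (d0 \<sigma>) v + (c * \<nu> - 1) * inner \<sigma> \<tau>" unfolding r1 r2 by simp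
    finally show "formA d0 d1 (\<sigma>, c *\<^sub>R d0 \<sigma>, 0) y = (\<nu> * \<gamma> / (\<nu> * \<gamma> + 1)) * formB V0 V1 d0 d1 \<gamma> (\<sigma>, c *\<^sub>R d0 \<sigma>, 0) y"
      unfolding yy A B lam_def by simp
  qed
qed

end

context setting begin

abbreviation "LL \<equiv> listed_eigenpairs V0 V1 d0 d1 \<gamma>"
abbreviation "MM \<equiv> mixed_space V0 V1 d0 d1"

lemma subM: "subspace MM" unfolding mixed_space_def using sub0 sub1 subH
  by (intro subspace_Times)

lemma L_M: "fst ` LL \<subseteq> MM"
proof
  fix x assume "x \<in> fst ` LL"
  then obtain lam where "(x, lam) \<in> LL" by force
  then show "x \<in> MM" unfolding listed_eigenpairs_def
    using d0V1 V1_scale V1_neg H_V1 Z1_V1 Z0_V0 by (auto simp: mixed_iff)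
qed

lemma sp_i: assumes "\<sigma> \<in> V0" shows "(\<sigma>, - \<gamma> *\<^sub>R d0 \<sigma>, 0) \<in> span (fst ` LL)"
proof (cases "\<sigma> = 0")
  case True then show ?thesis by (simp add: zero_prod_def[symmetric] span_zero)
next
  case False
  then have "((\<sigma>, - \<gamma> *\<^sub>R d0 \<sigma>, 0), -1) \<in> LL" using assms unfolding listed_eigenpairs_def by blast
  then show ?thesis by (intro span_base) force
qed

lemma sp_ii: assumes "p \<in> H" "l \<in> {1, -1::real}" shows "(0, l *\<^sub>R p, p) \<in> span (fst ` LL)"
proof (cases "p = 0")
  case True then show ?thesis by (simp add: zero_prod_def[symmetric] span_zero)
next
  case False
  then have "((0, l *\<^sub>R p, p), l) \<in> LL" using assms unfolding listed_eigenpairs_def by blast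
  then show ?thesis by (intro span_base) force
qed

lemma sp_iii: assumes "w \<in> Z1" "w \<noteq> 0" "\<mu> > 0" "\<forall>v\<in>Z1. inner (d1 w) (d1 v) = \<mu> * inner w v"
  shows "(0, w, 0) \<in> span (fst ` LL)"
proof -
  have "((0, w, 0), \<mu> * \<gamma> / (\<mu> * \<gamma> + 1)) \<in> LL" using assms unfolding listed_eigenpairs_def by blast
  then show ?thesis by (intro span_base) force
qed

lemma sp_iv: assumes "\<sigma> \<in> Z0" "\<sigma> \<noteq> 0" "\<nu> > 0" "\<forall>\<tau>\<in>Z0. inner (d0 \<sigma>) (d0 \<tau>) = \<nu> * inner \<sigma> \<tau>"
  shows "(\<sigma>, (\<gamma> / (\<nu> * \<gamma> / (\<nu> * \<gamma> + 1))) *\<^sub>R d0 \<sigma>, 0) \<in> span (fst ` LL)"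
proof -
  have "((\<sigma>, (\<gamma> / (\<nu> * \<gamma> / (\<nu> * \<gamma> + 1))) *\<^sub>R d0 \<sigma>, 0), \<nu> * \<gamma> / (\<nu> * \<gamma> + 1)) \<in> LL"
    using assms unfolding listed_eigenpairs_def by blast
  then show ?thesis by (intro span_base) force
qed

lemma sp_H1: assumes "h \<in> H" shows "(0, h, 0) \<in> span (fst ` LL)"
proof -
  have a: "(0, 1 *\<^sub>R h, h) \<in> span (fst ` LL)" "(0, (-1) *\<^sub>R h, h) \<in> span (fst ` LL)"
    using sp_ii[OF assms, of 1] sp_ii[OF assms, of "-1"] by auto
  have "(0::'a, h, 0::'b) = (1/2) *\<^sub>R (0::'a, 1 *\<^sub>R h, h) - (1/2) *\<^sub>R (0::'a, (-1) *\<^sub>R h, h)"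
    by (simp add: scaleR_add_left[symmetric])
  then show ?thesis using a by (metis span_diff span_scale)
qed

lemma sp_H2: assumes "h \<in> H" shows "(0, 0, h) \<in> span (fst ` LL)"
proof -
  have a: "(0, 1 *\<^sub>R h, h) \<in> span (fst ` LL)" "(0, (-1) *\<^sub>R h, h) \<in> span (fst ` LL)"
    using sp_ii[OF assms, of 1] sp_ii[OF assms, of "-1"] by auto
  have "(0::'a, 0::'b, h) = (1/2) *\<^sub>R (0::'a, 1 *\<^sub>R h, h) + (1/2) *\<^sub>R (0::'a, (-1) *\<^sub>R h, h)"
    by (simp add: scaleR_add_left[symmetric])
  then show ?thesis using a by (metis span_add span_scale)
qed

definition "S1 = {w. (0::'a, w, 0::'b) \<in> span (fst ` LL)}"

lemma subS1: "subspace S1"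
  unfolding subspace_def S1_def
proof (intro conjI ballI allI)
  show "0 \<in> {w. (0::'a, w, 0::'b) \<in> span (fst ` LL)}" by (simp add: zero_prod_def[symmetric] span_zero)
next
  fix x y assume "x \<in> {w. (0::'a, w, 0::'b) \<in> span (fst ` LL)}" "y \<in> {w. (0::'a, w, 0::'b) \<in> span (fst ` LL)}"
  then have "(0::'a, x, 0::'b) + (0, y, 0) \<in> span (fst ` LL)" by (intro span_add) auto
  then show "x + y \<in> {w. (0::'a, w, 0::'b) \<in> span (fst ` LL)}" by simp
next
  fix c x assume "x \<in> {w. (0::'a, w, 0::'b) \<in> span (fst ` LL)}"
  then have "c *\<^sub>R (0::'a, x, 0::'b) \<in> span (fst ` LL)" by (intro span_scale) auto
  then show "c *\<^sub>R x \<in> {w. (0::'a, w, 0::'b) \<in> span (fst ` LL)}" by simp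
qed

lemma Z1_S1: "Z1 \<subseteq> S1"
proof -
  obtain T where T: "finite T" "Z1 = span T" using findim1[OF subZ1] Z1_V1 by blast
  have lin: "linear_on_dom Z1 d1" using lin_mono[OF d1_lin] Z1_V1 by blast
  have "Z1 \<subseteq> span {w\<in>Z1. w \<noteq> 0 \<and> (\<exists>\<mu>>0. \<forall>v\<in>Z1. inner (d1 w) (d1 v) = \<mu> * inner w v)}"
    using eig_span[OF T lin] Z1_inj by blast
  also have "\<dots> \<subseteq> S1"
    using sp_iii by (intro span_minimal subS1) (auto simp: S1_def)
  finally show ?thesis .
qed

definition "S0 = {s\<in>V0. (0::'a, d0 s, 0::'b) \<in> span (fst ` LL)}"

lemma subS0: "subspace S0"
  unfolding subspace_def S0_def
proof (intro conjI ballI allI)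
  show "0 \<in> {s\<in>V0. (0::'a, d0 s, 0::'b) \<in> span (fst ` LL)}" by (simp add: zero_prod_def[symmetric] span_zero)
next
  fix x y assume a: "x \<in> {s\<in>V0. (0::'a, d0 s, 0::'b) \<in> span (fst ` LL)}" "y \<in> {s\<in>V0. (0::'a, d0 s, 0::'b) \<in> span (fst ` LL)}"
  then have "(0::'a, d0 x, 0::'b) + (0, d0 y, 0) \<in> span (fst ` LL)" by (intro span_add) auto
  then show "x + y \<in> {s\<in>V0. (0::'a, d0 s, 0::'b) \<in> span (fst ` LL)}" using a by (simp add: d0_add V0_add)
next
  fix c x assume a: "x \<in> {s\<in>V0. (0::'a, d0 s, 0::'b) \<in> span (fst ` LL)}"
  then have "c *\<^sub>R (0::'a, d0 x, 0::'b) \<in> span (fst ` LL)" by (intro span_scale) auto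
  then show "c *\<^sub>R x \<in> {s\<in>V0. (0::'a, d0 s, 0::'b) \<in> span (fst ` LL)}" using a by (simp add: d0_scale V0_scale)
qed

lemma E0_S0: assumes "s \<in> Z0" "s \<noteq> 0" "\<nu> > 0" "\<forall>\<tau>\<in>Z0. inner (d0 s) (d0 \<tau>) = \<nu> * inner s \<tau>"
  shows "s \<in> S0"
proof -
  define c where "c = \<gamma> / (\<nu> * \<gamma> / (\<nu> * \<gamma> + 1))"
  have sV: "s \<in> V0" using assms Z0_V0 by blast
  have c: "c > 0" unfolding c_def using gamma assms(3) by (simp add: divide_pos_pos add_pos_pos)
  have "(s, c *\<^sub>R d0 s, 0) - (s, - \<gamma> *\<^sub>R d0 s, 0) \<in> span (fst ` LL)"
    using sp_iv[OF assms] sp_i[OF sV] unfolding c_def by (intro span_diff)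
  then have "inverse (c + \<gamma>) *\<^sub>R ((s, c *\<^sub>R d0 s, 0) - (s, - \<gamma> *\<^sub>R d0 s, 0)) \<in> span (fst ` LL)"
    by (rule span_scale)
  moreover have "inverse (c + \<gamma>) *\<^sub>R ((s, c *\<^sub>R d0 s, 0) - (s, - \<gamma> *\<^sub>R d0 s, 0)) = (0::'a, d0 s, 0::'b)"
    using c gamma by (simp add: scaleR_add_left[symmetric])
  ultimately show ?thesis using sV by (simp add: S0_def)
qed

lemma Z0_S0: "Z0 \<subseteq> S0"
proof -
  obtain T where T: "finite T" "Z0 = span T" using findim0[OF subZ0] Z0_V0 by blast
  have lin: "linear_on_dom Z0 d0" using lin_mono[OF d0_lin] Z0_V0 by blast
  have "Z0 \<subseteq> span {w\<in>Z0. w \<noteq> 0 \<and> (\<exists>\<mu>>0. \<forall>v\<in>Z0. inner (d0 w) (d0 v) = \<mu> * inner w v)}"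
    using eig_span[OF T lin] Z0_inj by blast
  also have "\<dots> \<subseteq> S0"
    using E0_S0 by (intro span_minimal subS0) auto
  finally show ?thesis .
qed

lemma R_S1: assumes "\<rho> \<in> V0" shows "d0 \<rho> \<in> S1"
proof -
  obtain z where z: "z \<in> V0" "d0 z = 0" "\<rho> - z \<in> Z0" using decK0[OF assms] by blast
  have "\<rho> - z \<in> S0" using Z0_S0 z(3) by blast
  moreover have "d0 (\<rho> - z) = d0 \<rho>" using d0_diff[OF assms z(1)] z(2) by simp
  ultimately show ?thesis by (simp add: S0_def S1_def)
qed

lemma V1_S1: assumes "v \<in> V1" shows "v \<in> S1"
proof -
  obtain \<rho> w where rw: "\<rho> \<in> V0" "w \<in> Z1" "v = d0 \<rho> + P v + w" using decV1[OF assms] by blast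
  have "P v \<in> S1" using sp_H1[OF PH(1)] by (simp add: S1_def)
  then show ?thesis using R_S1[OF rw(1)] Z1_S1 rw(2,3) subS1
    by (metis subsetD subspace_add)
qed

lemma M_span: "MM \<subseteq> span (fst ` LL)"
proof
  fix x assume x: "x \<in> MM"
  obtain \<sigma> u p where xx: "x = (\<sigma>, u, p)" by (cases x) auto
  have xin: "\<sigma> \<in> V0" "u \<in> V1" "p \<in> H" using x xx by (auto simp: mixed_iff)
  have "u + \<gamma> *\<^sub>R d0 \<sigma> \<in> V1" using xin d0V1 V1_add V1_scale by blast
  then have a: "(0, u + \<gamma> *\<^sub>R d0 \<sigma>, 0) \<in> span (fst ` LL)" using V1_S1 by (simp add: S1_def)
  have "x = (\<sigma>, - \<gamma> *\<^sub>R d0 \<sigma>, 0) + (0, u + \<gamma> *\<^sub>R d0 \<sigma>, 0) + (0, 0, p)" by (simp add: xx)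
  then show "x \<in> span (fst ` LL)" using sp_i[OF xin(1)] a sp_H2[OF xin(3)] by (metis span_add)
qed

lemma part5: "\<exists>B \<subseteq> fst ` LL. independent B \<and> span B = MM"
proof -
  obtain B where B: "B \<subseteq> fst ` LL" "independent B" "fst ` LL \<subseteq> span B"
    using maximal_independent_subset[of "fst ` LL"] by blast
  have "span B \<subseteq> MM" using B(1) L_M subM by (meson span_minimal subset_trans)
  moreover have "span (fst ` LL) \<subseteq> span B" using B(3) by (rule span_minimal) simp
  then have "MM \<subseteq> span B" using M_span by (rule subset_trans[rotated])
  ultimately show ?thesis using B by blast
qed

end

context setting begin

lemma part6: assumes ep: "is_eigenpair V0 V1 d0 d1 \<gamma> lam x"
  shows "x \<in> span {y. (y, lam) \<in> LL}"
proof -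
  let ?S = "span {y. (y, lam) \<in> LL}"
  have inS: "y \<in> ?S" if "(y, lam) \<in> LL" for y using that by (intro span_base) simp
  have zS: "0 \<in> ?S" by (rule span_zero)
  obtain \<sigma> u p where xx: "x = (\<sigma>, u, p)" by (cases x) auto
  have xin: "\<sigma> \<in> V0" "u \<in> V1" "p \<in> H" using ep xx by (auto simp: is_eigenpair_def mixed_iff)
  have eq: "formA d0 d1 (\<sigma>, u, p) (\<tau>, v, q) = lam * formB V0 V1 d0 d1 \<gamma> (\<sigma>, u, p) (\<tau>, v, q)"
    if "\<tau> \<in> V0" "v \<in> V1" "q \<in> H" for \<tau> v q
    using ep xx that by (auto simp: is_eigenpair_def mixed_iff)
  obtain \<rho> w where rw: "\<rho> \<in> V0" "w \<in> Z1" "u = d0 \<rho> + P u + w" using decV1[OF xin(2)] by blast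
  define h where "h = P u"
  have hH: "h \<in> H" using PH(1) h_def by simp
  have u_eq: "u = d0 \<rho> + h + w" using rw(3) h_def by simp
  have wV: "w \<in> V1" using rw(2) Z1_V1 by blast
  have d\<rho>V: "d0 \<rho> \<in> V1" using d0V1 rw(1) .
  have hV: "h \<in> V1" using H_V1 hH .
  have d1u: "d1 u = d1 w"
  proof -
    have "d1 u = d1 (d0 \<rho> + h) + d1 w" unfolding u_eq using d1_add V1_add d\<rho>V hV wV by simp
    also have "\<dots> = d1 w" using d1_add[OF d\<rho>V hV] complex rw(1) H_d1[OF hH] by simp
    finally show ?thesis .
  qed
  have umh: "u - h = d0 \<rho> + w" using u_eq by simp
  obtain \<kappa> where \<kappa>: "\<kappa> \<in> V0" "d0 \<kappa> = 0" "\<sigma> - \<kappa> \<in> Z0" using decK0[OF xin(1)] by blast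
  have d0\<sigma>V: "d0 \<sigma> \<in> V1" using d0V1 xin(1) .
  have s\<kappa>: "inner (\<sigma> - \<kappa>) \<kappa> = 0" using Z0_K0[OF \<kappa>(3) \<kappa>(1,2)] .
  have \<sigma>\<kappa>: "inner \<sigma> \<kappa> = inner \<kappa> \<kappa>" using s\<kappa> by (simp add: inner_diff_left)
  have P0: "P 0 = 0" using P_H[OF H_0] .
  have ud: "inner u (d0 \<tau>) = inner (d0 \<rho>) (d0 \<tau>)" if "\<tau> \<in> V0" for \<tau>
    unfolding u_eq using H_R[OF hH that] Z1_R[OF rw(2) that] by (simp add: inner_add_left)

  have T1: "inner h q = lam * inner p q" if q: "q \<in> H" for q
  proof -
    have o1: "inner (d0 \<rho>) q = 0" using H_R[OF q rw(1)] by (simp add: inner_commute)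
    have "inner u q = inner h q" unfolding u_eq
      using o1 Z1_H[OF rw(2) q] by (simp add: inner_add_left)
    then show ?thesis using eq[OF V0_0 V1_0 q] unfolding formA_eq formB_eq P0 by simp
  qed
  have h_lp: "h = lam *\<^sub>R p"
  proof -
    have q: "h - lam *\<^sub>R p \<in> H" using hH xin(3) subH by (simp add: subspace_diff subspace_scale)
    have "inner (h - lam *\<^sub>R p) (h - lam *\<^sub>R p) = inner h (h - lam *\<^sub>R p) - lam * inner p (h - lam *\<^sub>R p)"
      by (simp add: inner_diff_left)
    also have "\<dots> = 0" using T1[OF q] by simp
    finally show ?thesis by simp
  qed
  have T2: "inner p v = lam * inner h v" if v: "v \<in> H" for v
  proof -
    have "formA d0 d1 (\<sigma>, u, p) (0, v, 0) = inner p v"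
      unfolding formA_eq using H_d1[OF v] H_R[OF v xin(1)] by (simp add: inner_commute)
    moreover have "formB V0 V1 d0 d1 \<gamma> (\<sigma>, u, p) (0, v, 0) = inner h v"
      unfolding formB_eq P_H[OF v] h_def[symmetric] using H_d1[OF v] by simp
    ultimately show ?thesis using eq[OF V0_0 H_V1[OF v] H_0] by simp
  qed
  have p_lh: "p = lam *\<^sub>R h"
  proof -
    have q: "p - lam *\<^sub>R h \<in> H" using hH xin(3) subH by (simp add: subspace_diff subspace_scale)
    have "inner (p - lam *\<^sub>R h) (p - lam *\<^sub>R h) = inner p (p - lam *\<^sub>R h) - lam * inner h (p - lam *\<^sub>R h)"
      by (simp add: inner_diff_left)
    also have "\<dots> = 0" using T2[OF q] by simp
    finally show ?thesis by simp
  qed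
  have T3: "inner (d1 w) (d1 v) = lam * (inverse \<gamma> * inner w v + inner (d1 w) (d1 v))" if v: "v \<in> Z1" for v
  proof -
    have vV: "v \<in> V1" using Z1_V1 v .
    have o1: "inner (d0 \<sigma>) v = 0" using Z1_R[OF v xin(1)] by (simp add: inner_commute)
    have o2: "inner p v = 0" using Z1_H[OF v xin(3)] by (simp add: inner_commute)
    have o3: "inner (d0 \<rho>) v = 0" using Z1_R[OF v rw(1)] by (simp add: inner_commute)
    have "formA d0 d1 (\<sigma>, u, p) (0, v, 0) = inner (d1 w) (d1 v)"
      unfolding formA_eq d1u using o1 o2 by simp
    moreover have "formB V0 V1 d0 d1 \<gamma> (\<sigma>, u, p) (0, v, 0) = inverse \<gamma> * inner w v + inner (d1 w) (d1 v)"
      unfolding formB_eq P_zero_Z1[OF v] h_def[symmetric] umh d1u using o3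
      by (simp add: inner_add_left)
    ultimately show ?thesis using eq[OF V0_0 vV H_0] by simp
  qed
  have T4: "inner (d0 \<sigma>) (d0 \<tau>) = lam * (inverse \<gamma> * inner (d0 \<rho>) (d0 \<tau>))" if t: "\<tau> \<in> V0" for \<tau>
  proof -
    have Pd: "P (d0 \<tau>) = 0" using P_zero_R[OF t, of 1] by simp
    have "formA d0 d1 (\<sigma>, u, p) (0, d0 \<tau>, 0) = inner (d0 \<sigma>) (d0 \<tau>)"
      unfolding formA_eq using complex t H_R[OF xin(3) t] by simp
    moreover have "formB V0 V1 d0 d1 \<gamma> (\<sigma>, u, p) (0, d0 \<tau>, 0) = inverse \<gamma> * inner (d0 \<rho>) (d0 \<tau>)"
      unfolding formB_eq Pd h_def[symmetric] umh using Z1_R[OF rw(2) t] complex t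
      by (simp add: inner_add_left)
    ultimately show ?thesis using eq[OF V0_0 d0V1[OF t] H_0] by simp
  qed
  have d\<sigma>_eq: "d0 \<sigma> = (lam / \<gamma>) *\<^sub>R d0 \<rho>"
  proof -
    define \<tau> where "\<tau> = \<sigma> - (lam / \<gamma>) *\<^sub>R \<rho>"
    have t: "\<tau> \<in> V0" unfolding \<tau>_def using xin(1) rw(1) V0_diff V0_scale by blast
    have dt: "d0 \<tau> = d0 \<sigma> - (lam / \<gamma>) *\<^sub>R d0 \<rho>"
      unfolding \<tau>_def using d0_diff[OF xin(1) V0_scale[OF rw(1)]] d0_scale[OF rw(1)] by simp
    have "inner (d0 \<tau>) (d0 \<tau>) = inner (d0 \<sigma>) (d0 \<tau>) - (lam / \<gamma>) * inner (d0 \<rho>) (d0 \<tau>)"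
      unfolding dt[of] by (simp add: inner_diff_left)
    also have "\<dots> = 0" using T4[OF t] by (simp add: divide_inverse)
    finally show ?thesis using dt by simp
  qed
  have T5: "inner (d0 \<rho>) (d0 \<tau>) - inner \<sigma> \<tau> = lam * (inner \<sigma> \<tau> + \<gamma> * inner (d0 \<sigma>) (d0 \<tau>))"
    if t: "\<tau> \<in> V0" for \<tau>
  proof -
    have "formA d0 d1 (\<sigma>, u, p) (\<tau>, 0, 0) = inner (d0 \<rho>) (d0 \<tau>) - inner \<sigma> \<tau>"
      unfolding formA_eq using ud[OF t] by simp
    moreover have "formB V0 V1 d0 d1 \<gamma> (\<sigma>, u, p) (\<tau>, 0, 0) = inner \<sigma> \<tau> + \<gamma> * inner (d0 \<sigma>) (d0 \<tau>)"
      unfolding formB_eq P0 by simp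
    ultimately show ?thesis using eq[OF t V1_0 H_0] by simp
  qed
  have ww: "inner w w \<ge> 0" "inner (d1 w) (d1 w) \<ge> 0" by simp_all

  show ?thesis
  proof (cases "lam = -1")
    case True
    have "inner w w = 0"
    proof -
      have "inner (d1 w) (d1 w) = - (inverse \<gamma> * inner w w + inner (d1 w) (d1 w))" using T3[OF rw(2)] True by simp
      then have "inverse \<gamma> * inner w w \<le> 0" using ww by linarith
      then show ?thesis using gamma ww by (simp add: mult_le_0_iff)
    qed
    then have w0: "w = 0" by simp
    have "d0 \<rho> = (- \<gamma>) *\<^sub>R d0 \<sigma>" using d\<sigma>_eq True gamma by simp
    then have "u = - \<gamma> *\<^sub>R d0 \<sigma> + (-1) *\<^sub>R p" using u_eq w0 h_lp True by simp
    then have xdec: "x = (\<sigma>, - \<gamma> *\<^sub>R d0 \<sigma>, 0) + (0, (-1) *\<^sub>R p, p)" using xx by simp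
    have a: "(\<sigma>, - \<gamma> *\<^sub>R d0 \<sigma>, 0) \<in> ?S"
    proof (cases "\<sigma> = 0")
      case True then show ?thesis using zS by (simp add: zero_prod_def)
    next
      case False then show ?thesis using xin(1) \<open>lam = -1\<close> by (intro inS) (unfold listed_eigenpairs_def, blast)
    qed
    have b: "(0, (-1) *\<^sub>R p, p) \<in> ?S"
    proof (cases "p = 0")
      case True then show ?thesis using zS by (simp add: zero_prod_def)
    next
      case False
      have "((0, (-1) *\<^sub>R p, p), -1) \<in> LL" using xin(3) False unfolding listed_eigenpairs_def by blast
      then show ?thesis using \<open>lam = -1\<close> by (intro inS) simp
    qed
    show ?thesis unfolding xdec using a b by (rule span_add)
  next
    case nm1: False
    show ?thesis
    proof (cases "lam = 1")
      case True
      have "inner w w = 0"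
      proof -
        have "inner (d1 w) (d1 w) = inverse \<gamma> * inner w w + inner (d1 w) (d1 w)" using T3[OF rw(2)] True by simp
        then show ?thesis using gamma by simp
      qed
      then have w0: "w = 0" by simp
      have "inner \<kappa> \<kappa> = 0"
      proof -
        have "- inner \<sigma> \<kappa> = inner \<sigma> \<kappa>" using T5[OF \<kappa>(1)] \<kappa>(2) True by simp
        then show ?thesis using \<sigma>\<kappa> by simp
      qed
      then have "\<kappa> = 0" by simp
      have dr: "d0 \<rho> = \<gamma> *\<^sub>R d0 \<sigma>" using d\<sigma>_eq True gamma by simp
      have "inner \<sigma> \<sigma> = 0"
      proof -
        have "inner (d0 \<rho>) (d0 \<sigma>) - inner \<sigma> \<sigma> = inner \<sigma> \<sigma> + \<gamma> * inner (d0 \<sigma>) (d0 \<sigma>)"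
          using T5[OF xin(1)] True by simp
        then show ?thesis unfolding dr by simp
      qed
      then have "\<sigma> = 0" by simp
      then have "d0 \<rho> = 0" using dr by simp
      then have "x = (0, 1 *\<^sub>R p, p)" using xx u_eq w0 h_lp True \<open>\<sigma> = 0\<close> by simp
      moreover have "(0, 1 *\<^sub>R p, p) \<in> ?S"
      proof (cases "p = 0")
        case True then show ?thesis using zS by (simp add: zero_prod_def)
      next
        case False
        have "((0, 1 *\<^sub>R p, p), 1) \<in> LL" using xin(3) False unfolding listed_eigenpairs_def by blast
        then show ?thesis using \<open>lam = 1\<close> by (intro inS) simp
      qed
      ultimately show ?thesis by simp
    next
      case n1: False
      have p0: "p = 0"
      proof -
        have "p = (lam * lam) *\<^sub>R p" using p_lh h_lp by simp
        then have "(1 - lam * lam) *\<^sub>R p = 0" by (simp add: algebra_simps)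
        moreover have "1 - lam * lam \<noteq> 0"
        proof
          assume "1 - lam * lam = 0"
          then have "(1 - lam) * (1 + lam) = 0" by (simp add: algebra_simps)
          then show False using nm1 n1 by (simp add: add_eq_0_iff)
        qed
        ultimately show ?thesis by simp
      qed
      then have h0: "h = 0" using h_lp by simp
      have "\<kappa> = 0"
      proof -
        have "- inner \<sigma> \<kappa> = lam * inner \<sigma> \<kappa>" using T5[OF \<kappa>(1)] \<kappa>(2) by simp
        then have "(1 + lam) * inner \<sigma> \<kappa> = 0" by (simp add: algebra_simps)
        then have "inner \<sigma> \<kappa> = 0" using nm1 by (simp add: add_eq_0_iff)
        then show ?thesis using \<sigma>\<kappa> by simp
      qed
      then have sZ: "\<sigma> \<in> Z0" using \<kappa>(3) by simp
      show ?thesis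
      proof (cases "lam = 0")
        case True
        have "d1 w = 0" using T3[OF rw(2)] True by simp
        then have w0: "w = 0" using Z1_inj[OF rw(2)] by simp
        have "d0 \<sigma> = 0" using d\<sigma>_eq True by simp
        then have s0: "\<sigma> = 0" using Z0_inj[OF sZ] by simp
        have "inner (d0 \<rho>) (d0 \<rho>) = 0" using T5[OF rw(1)] True s0 by simp
        then have "d0 \<rho> = 0" by simp
        then have "x = 0" using xx u_eq w0 h0 p0 s0 by (simp add: zero_prod_def)
        then show ?thesis using zS by simp
      next
        case n0: False
        define m where "m = lam / (\<gamma> * (1 - lam))"
        have mr: "m * \<gamma> / (m * \<gamma> + 1) = lam" unfolding m_def by (rule ratio[OF n1])
        have dr: "d0 \<rho> = (\<gamma> / lam) *\<^sub>R d0 \<sigma>" using d\<sigma>_eq n0 gamma by simp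
        have xdec: "x = (\<sigma>, (\<gamma> / lam) *\<^sub>R d0 \<sigma>, 0) + (0, w, 0)" using xx u_eq h0 p0 dr by simp
        have a: "(\<sigma>, (\<gamma> / lam) *\<^sub>R d0 \<sigma>, 0) \<in> ?S"
        proof (cases "\<sigma> = 0")
          case True then show ?thesis using zS by (simp add: zero_prod_def)
        next
          case s0: False
          have em: "inner (d0 \<sigma>) (d0 \<tau>) = m * inner \<sigma> \<tau>" if t: "\<tau> \<in> Z0" for \<tau>
          proof -
            have tV: "\<tau> \<in> V0" using Z0_V0 t .
            have "(\<gamma> / lam) * inner (d0 \<sigma>) (d0 \<tau>) - inner \<sigma> \<tau> = lam * (inner \<sigma> \<tau> + \<gamma> * inner (d0 \<sigma>) (d0 \<tau>))"
              using T5[OF tV] unfolding dr by simp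
            then show ?thesis unfolding m_def by (rule arith1[OF gamma n0 n1 nm1])
          qed
          have mpos: "m > 0"
          proof -
            have a: "inner (d0 \<sigma>) (d0 \<sigma>) = m * inner \<sigma> \<sigma>" using em[OF sZ] .
            have b: "inner \<sigma> \<sigma> > 0" using s0 by simp
            have mn: "m \<noteq> 0" unfolding m_def using n0 n1 gamma by simp
            have "m = inner (d0 \<sigma>) (d0 \<sigma>) / inner \<sigma> \<sigma>" using a b by simp
            then have "m \<ge> 0" by simp
            then show ?thesis using mn by simp
          qed
          have "((\<sigma>, (\<gamma> / (m * \<gamma> / (m * \<gamma> + 1))) *\<^sub>R d0 \<sigma>, 0), m * \<gamma> / (m * \<gamma> + 1)) \<in> LL"
            using sZ s0 mpos em unfolding listed_eigenpairs_def by blast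
          then show ?thesis unfolding mr by (intro inS)
        qed
        have b: "(0, w, 0) \<in> ?S"
        proof (cases "w = 0")
          case True then show ?thesis using zS by (simp add: zero_prod_def)
        next
          case w0: False
          have em: "inner (d1 w) (d1 v) = m * inner w v" if v: "v \<in> Z1" for v
            unfolding m_def using arith2[OF gamma n1 T3[OF v]] .
          have mpos: "m > 0"
          proof -
            have a: "inner (d1 w) (d1 w) = m * inner w w" using em[OF rw(2)] .
            have b: "inner w w > 0" using w0 by simp
            have "d1 w \<noteq> 0" using Z1_inj[OF rw(2)] w0 by blast
            then have c: "inner (d1 w) (d1 w) > 0" by simp
            have "m = inner (d1 w) (d1 w) / inner w w" using a b by simp
            then show ?thesis using b c by simp
          qed
          have "((0, w, 0), m * \<gamma> / (m * \<gamma> + 1)) \<in> LL"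
            using rw(2) w0 mpos em unfolding listed_eigenpairs_def by blast
          then show ?thesis unfolding mr by (intro inS)
        qed
        show ?thesis unfolding xdec using a b by (rule span_add)
      qed
    qed
  qed
qed

end

theorem mainTheorem14:
  fixes V0 :: "'a::{real_inner,complete_space} set"
    and V1 :: "'b::{real_inner,complete_space} set"
    and d0 :: "'a \<Rightarrow> 'b" and d1 :: "'b \<Rightarrow> 'c::{real_inner,complete_space}"
    and \<gamma> :: real
  assumes V0: "fin_dim_subspace V0" and V1: "fin_dim_subspace V1"
    and d0_lin: "linear_on_dom V0 d0" and d1_lin: "linear_on_dom V1 d1"
    and d0_into: "d0 ` V0 \<subseteq> V1"
    and complex: "\<forall>\<sigma>\<in>V0. d1 (d0 \<sigma>) = 0"
    and gamma: "\<gamma> > 0"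
  shows
    "(\<forall>\<sigma>\<in>V0. \<sigma> \<noteq> 0 \<longrightarrow> is_eigenpair V0 V1 d0 d1 \<gamma> (-1) (\<sigma>, - \<gamma> *\<^sub>R d0 \<sigma>, 0))
   \<and> (\<forall>p\<in>harmonic V0 V1 d0 d1. \<forall>l\<in>{1, -1::real}. p \<noteq> 0 \<longrightarrow>
        is_eigenpair V0 V1 d0 d1 \<gamma> l (0, l *\<^sub>R p, p))
   \<and> (\<forall>u\<in>Zperp V1 d1. \<forall>\<mu>::real. u \<noteq> 0 \<and> \<mu> > 0 \<and>
        (\<forall>v\<in>Zperp V1 d1. inner (d1 u) (d1 v) = \<mu> * inner u v) \<longrightarrow>
        is_eigenpair V0 V1 d0 d1 \<gamma> (\<mu> * \<gamma> / (\<mu> * \<gamma> + 1)) (0, u, 0))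
   \<and> (\<forall>\<sigma>\<in>Zperp V0 d0. \<forall>\<nu>::real. \<sigma> \<noteq> 0 \<and> \<nu> > 0 \<and>
        (\<forall>\<tau>\<in>Zperp V0 d0. inner (d0 \<sigma>) (d0 \<tau>) = \<nu> * inner \<sigma> \<tau>) \<longrightarrow>
        (let lam = \<nu> * \<gamma> / (\<nu> * \<gamma> + 1) in
          is_eigenpair V0 V1 d0 d1 \<gamma> lam (\<sigma>, (\<gamma> / lam) *\<^sub>R d0 \<sigma>, 0)))
   \<and> (\<exists>B \<subseteq> fst ` listed_eigenpairs V0 V1 d0 d1 \<gamma>.
        independent B \<and> span B = mixed_space V0 V1 d0 d1)
   \<and> (\<forall>lam x. is_eigenpair V0 V1 d0 d1 \<gamma> lam x \<longrightarrow>
        x \<in> span {y. (y, lam) \<in> listed_eigenpairs V0 V1 d0 d1 \<gamma>})"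
proof -
  interpret setting V0 V1 d0 d1 \<gamma>
    by (rule setting.intro) (fact V0 V1 d0_lin d1_lin d0_into complex gamma)+
  have 1: "\<forall>\<sigma>\<in>V0. \<sigma> \<noteq> 0 \<longrightarrow> is_eigenpair V0 V1 d0 d1 \<gamma> (-1) (\<sigma>, - \<gamma> *\<^sub>R d0 \<sigma>, 0)"
    using part1 by blast
  have 2: "\<forall>p\<in>harmonic V0 V1 d0 d1. \<forall>l\<in>{1, -1::real}. p \<noteq> 0 \<longrightarrow>
        is_eigenpair V0 V1 d0 d1 \<gamma> l (0, l *\<^sub>R p, p)"
    using part2 by blast
  have 3: "\<forall>u\<in>Zperp V1 d1. \<forall>\<mu>::real. u \<noteq> 0 \<and> \<mu> > 0 \<and>
        (\<forall>v\<in>Zperp V1 d1. inner (d1 u) (d1 v) = \<mu> * inner u v) \<longrightarrow>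
        is_eigenpair V0 V1 d0 d1 \<gamma> (\<mu> * \<gamma> / (\<mu> * \<gamma> + 1)) (0, u, 0)"
    using part3 by blast
  have 4: "\<forall>\<sigma>\<in>Zperp V0 d0. \<forall>\<nu>::real. \<sigma> \<noteq> 0 \<and> \<nu> > 0 \<and>
        (\<forall>\<tau>\<in>Zperp V0 d0. inner (d0 \<sigma>) (d0 \<tau>) = \<nu> * inner \<sigma> \<tau>) \<longrightarrow>
        (let lam = \<nu> * \<gamma> / (\<nu> * \<gamma> + 1) in
          is_eigenpair V0 V1 d0 d1 \<gamma> lam (\<sigma>, (\<gamma> / lam) *\<^sub>R d0 \<sigma>, 0))"
    unfolding Let_def using part4 by blast
  show ?thesis using 1 2 3 4 part5 part6 by blast
qed

end
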